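(* In the deterministic generalized top-$k$ selective gossip setting described in the context (with $G$ connected), let $\{a,b\}\in E$. If for some candidate $j\in[n]$ and some agent $i\in[m]$ we have $X_{ij}(\infty)>\alpha_{ab}$, then $j\in S^\infty_{a'b'}$ for every $\{a',b'\}\in E$.
   Context: Fix integers $m\ge2$, $n\ge1$, $k\in[n]$. For $v\in\mathbb{R}^n$ let $\sigma$ be a permutation of $[n]$ with $v_{\sigma(1)}\ge\cdots\ge v_{\sigma(n)}$ and set $T_k(v)=\{j\in[n]: v_j\ge v_{\sigma(k)}\}$. Let $\{i_1(t),i_2(t)\}_{t\ge0}$ be a deterministic sequence of unordered pairs of distinct agents in $[m]$, and let $E$ be the set of pairs $\{a,b\}$ with $\{i_1(t),i_2(t)\}=\{a,b\}$ for infinitely many $t$; assume the graph $G=([m],E)$ is connected. Let $X(0)\in\mathbb{R}^{m\times n}$ and define $X(t)$ by: $S(t)=T_k(X_{i_1(t)}(t))\cup T_k(X_{i_2(t)}(t))$ (where $X_i(t)$ is row $i$), $X_{ij}(t+1)=\tfrac12(X_{i_1(t)j}(t)+X_{i_2(t)j}(t))$ if $i\in\{i_1(t),i_2(t)\}$ and $j\in S(t)$, and $X_{ij}(t+1)=X_{ij}(t)$ otherwise. The limit $X(\infty)=\lim_{t\to\infty}X(t)$ exists. For $\{a,b\}\in E$ let $\beta_{ab}(s)$ be the $s$-th time $t$ with $\{i_1(t),i_2(t)\}=\{a,b\}$, let $S^\infty_{ab}=\bigcap_{t\ge0}\bigcup_{s\ge t}S(\beta_{ab}(s))$, and $\alpha_{ab}=\min_{j\in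 S^\infty_{ab}}X_{aj}(\infty)$ (which also equals $\min_{j\in S^\infty_{ab}}X_{bj}(\infty)$). *)

theory Defs
  imports Complex_Main "HOL-Combinatorics.Permutations" "HOL-Library.Infinite_Set"
begin

text \<open>Agents are indexed by {1..m}, candidates by {1..n}. A vector in R^n is a
function nat => real (only the values on {1..n} matter).\<close>

definition kth_val :: "nat \<Rightarrow> nat \<Rightarrow> (nat \<Rightarrow> real) \<Rightarrow> real" where
  "kth_val n k v = v ((SOME \<sigma>. \<sigma> permutes {1..n} \<and>
      (\<forall>p q. 1 \<le> p \<longrightarrow> p \<le> q \<longrightarrow> q \<le> n \<longrightarrow> v (\<sigma> q) \<le> v (\<sigma> p))) k)"

definition topk :: "nat \<Rightarrow> nat \<Rightarrow> (nat \<Rightarrow> real) \<Rightarrow> nat set" where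
  "topk n k v = {j \<in> {1..n}. v j \<ge> kth_val n k v}"

text \<open>The gossip dynamics: gossip n k i1 i2 X0 t i j = X_{ij}(t).\<close>
primrec gossip :: "nat \<Rightarrow> nat \<Rightarrow> (nat \<Rightarrow> nat) \<Rightarrow> (nat \<Rightarrow> nat) \<Rightarrow> (nat \<Rightarrow> nat \<Rightarrow> real)
    \<Rightarrow> nat \<Rightarrow> nat \<Rightarrow> nat \<Rightarrow> real" where
  "gossip n k i1 i2 X0 0 = X0"
| "gossip n k i1 i2 X0 (Suc t) =
     (let X = gossip n k i1 i2 X0 t;
          S = topk n k (X (i1 t)) \<union> topk n k (X (i2 t))
      in (\<lambda>i j. if (i = i1 t \<or> i = i2 t) \<and> j \<in> S
                 then (X (i1 t) j + X (i2 t) j) / 2 else X i j))"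

definition selS :: "nat \<Rightarrow> nat \<Rightarrow> (nat \<Rightarrow> nat) \<Rightarrow> (nat \<Rightarrow> nat) \<Rightarrow> (nat \<Rightarrow> nat \<Rightarrow> real)
    \<Rightarrow> nat \<Rightarrow> nat set" where
  "selS n k i1 i2 X0 t =
     topk n k (gossip n k i1 i2 X0 t (i1 t)) \<union> topk n k (gossip n k i1 i2 X0 t (i2 t))"

definition edges :: "(nat \<Rightarrow> nat) \<Rightarrow> (nat \<Rightarrow> nat) \<Rightarrow> nat set set" where
  "edges i1 i2 = {e. infinite {t. {i1 t, i2 t} = e}}"

definition graph_connected :: "nat \<Rightarrow> nat set set \<Rightarrow> bool" where
  "graph_connected m E \<longleftrightarrow>
     (\<forall>a\<in>{1..m}. \<forall>b\<in>{1..m}. (a, b) \<in> {(x, y). {x, y} \<in> E}\<^sup>*)"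

text \<open>beta_e(s): the s-th time (counting from 0) at which pair e is activated.\<close>
definition beta :: "(nat \<Rightarrow> nat) \<Rightarrow> (nat \<Rightarrow> nat) \<Rightarrow> nat set \<Rightarrow> nat \<Rightarrow> nat" where
  "beta i1 i2 e s = enumerate {t. {i1 t, i2 t} = e} s"

definition Sinf :: "nat \<Rightarrow> nat \<Rightarrow> (nat \<Rightarrow> nat) \<Rightarrow> (nat \<Rightarrow> nat) \<Rightarrow> (nat \<Rightarrow> nat \<Rightarrow> real)
    \<Rightarrow> nat set \<Rightarrow> nat set" where
  "Sinf n k i1 i2 X0 e = (\<Inter>t. \<Union>s\<in>{t..}. selS n k i1 i2 X0 (beta i1 i2 e s))"

definition alpha :: "nat \<Rightarrow> nat \<Rightarrow> (nat \<Rightarrow> nat) \<Rightarrow> (nat \<Rightarrow> nat) \<Rightarrow> (nat \<Rightarrow> nat \<Rightarrow> real)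
    \<Rightarrow> (nat \<Rightarrow> nat \<Rightarrow> real) \<Rightarrow> nat \<Rightarrow> nat \<Rightarrow> real" where
  "alpha n k i1 i2 X0 Xinf a b = Min (Xinf a ` Sinf n k i1 i2 X0 {a, b})"

end

theory Submission
  imports Defs
begin

lemma sort_perm_ex:
  fixes v :: "nat \<Rightarrow> real"
  shows "\<exists>\<sigma>. \<sigma> permutes {1..n} \<and>
      (\<forall>p q. 1 \<le> p \<longrightarrow> p \<le> q \<longrightarrow> q \<le> n \<longrightarrow> v (\<sigma> q) \<le> v (\<sigma> p))"
proof -
  define xs where "xs = sort_key (\<lambda>j. - v j) [1..<n+1]"
  have len: "length xs = n" and dist: "distinct xs" and st: "set xs = {1..n}"
    by (auto simp: xs_def)
  have so: "sorted (map (\<lambda>j. - v j) xs)" by (simp add: xs_def)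
  define \<sigma> where "\<sigma> p = (if p \<in> {1..n} then xs ! (p - 1) else p)" for p
  have "bij_betw \<sigma> {1..n} {1..n}"
  proof (rule bij_betw_imageI)
    show "inj_on \<sigma> {1..n}"
      by (rule inj_onI) (auto simp: \<sigma>_def len dist nth_eq_iff_index_eq)
    show "\<sigma> ` {1..n} = {1..n}"
    proof
      show "\<sigma> ` {1..n} \<subseteq> {1..n}"
        using st len by (auto simp: \<sigma>_def) (metis Suc_diff_1 Suc_le_eq atLeastAtMost_iff nth_mem le_refl
             diff_less less_le_trans zero_less_one)+
      show "{1..n} \<subseteq> \<sigma> ` {1..n}"
      proof
        fix y assume "y \<in> {1..n}"
        then obtain i where i: "i < n" "xs ! i = y" using st len by (metis in_set_conv_nth)
        then have "\<sigma> (i+1) = y" by (auto simp: \<sigma>_def)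
        moreover have "i + 1 \<in> {1..n}" using i by auto
        ultimately show "y \<in> \<sigma> ` {1..n}" by (metis image_eqI)
      qed
    qed
  qed
  then have "\<sigma> permutes {1..n}"
    by (rule bij_imp_permutes) (auto simp: \<sigma>_def)
  moreover have "\<forall>p q. 1 \<le> p \<longrightarrow> p \<le> q \<longrightarrow> q \<le> n \<longrightarrow> v (\<sigma> q) \<le> v (\<sigma> p)"
  proof (intro allI impI)
    fix p q :: nat assume h: "1 \<le> p" "p \<le> q" "q \<le> n"
    have "map (\<lambda>j. - v j) xs ! (p-1) \<le> map (\<lambda>j. - v j) xs ! (q-1)"
      by (rule sorted_nth_mono[OF so]) (use h len in auto)
    then show "v (\<sigma> q) \<le> v (\<sigma> p)" using h len by (auto simp: \<sigma>_def)
  qed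
  ultimately show ?thesis by blast
qed

lemma kth_sigma:
  assumes "1 \<le> k" "k \<le> n"
  obtains \<sigma> where "\<sigma> permutes {1..n}"
    "\<forall>p q. 1 \<le> p \<longrightarrow> p \<le> q \<longrightarrow> q \<le> n \<longrightarrow> v (\<sigma> q) \<le> v (\<sigma> p)"
    "kth_val n k v = v (\<sigma> k)"
  using someI_ex[OF sort_perm_ex[of n v]] unfolding kth_val_def by blast

lemma topk_sub: "topk n k v \<subseteq> {1..n}" by (auto simp: topk_def)

lemma card_topk:
  assumes "1 \<le> k" "k \<le> n"
  shows "k \<le> card (topk n k v)"
proof -
  obtain \<sigma> where s: "\<sigma> permutes {1..n}"
    "\<forall>p q. 1 \<le> p \<longrightarrow> p \<le> q \<longrightarrow> q \<le> n \<longrightarrow> v (\<sigma> q) \<le> v (\<sigma> p)"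
    "kth_val n k v = v (\<sigma> k)" using kth_sigma[OF assms] by blast
  have "\<sigma> ` {1..k} \<subseteq> topk n k v"
  proof
    fix y assume "y \<in> \<sigma> ` {1..k}"
    then obtain p where p: "p \<in> {1..k}" "y = \<sigma> p" by blast
    then have "y \<in> {1..n}" using permutes_in_image[OF s(1), of p] assms by auto
    moreover have "v y \<ge> v (\<sigma> k)" using s(2) p assms by auto
    ultimately show "y \<in> topk n k v" using s(3) by (auto simp: topk_def)
  qed
  moreover have "card (\<sigma> ` {1..k}) = k"
    using permutes_inj[OF s(1)] by (simp add: card_image inj_on_def inj_def)
  ultimately show ?thesis
    by (metis card_mono finite_subset topk_sub finite_atLeastAtMost)
qed

lemma card_above:
  assumes "1 \<le> k" "k \<le> n"
  shows "card {j \<in> {1..n}. v j > kth_val n k v} < k"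
proof -
  obtain \<sigma> where s: "\<sigma> permutes {1..n}"
    "\<forall>p q. 1 \<le> p \<longrightarrow> p \<le> q \<longrightarrow> q \<le> n \<longrightarrow> v (\<sigma> q) \<le> v (\<sigma> p)"
    "kth_val n k v = v (\<sigma> k)" using kth_sigma[OF assms] by blast
  have "{j \<in> {1..n}. v j > kth_val n k v} \<subseteq> \<sigma> ` {1..<k}"
  proof
    fix j assume j: "j \<in> {j \<in> {1..n}. v j > kth_val n k v}"
    then obtain p where p: "p \<in> {1..n}" "\<sigma> p = j"
      using permutes_surj[OF s(1)] permutes_image[OF s(1)] by (metis CollectD imageE)
    have "p < k"
    proof (rule ccontr)
      assume "\<not> p < k"
      then have "v (\<sigma> p) \<le> v (\<sigma> k)" using s(2) p assms by auto
      then show False using j p s(3) by auto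
    qed
    then show "j \<in> \<sigma> ` {1..<k}" using p by auto
  qed
  then have "card {j \<in> {1..n}. v j > kth_val n k v} \<le> card (\<sigma> ` {1..<k})"
    by (simp add: card_mono)
  also have "\<dots> \<le> card {1..<k}" by (rule card_image_le) simp
  finally show ?thesis using assms by simp
qed

locale GS =
  fixes m n k :: nat and i1 i2 :: "nat \<Rightarrow> nat" and X0 x :: "nat \<Rightarrow> nat \<Rightarrow> real"
  assumes k1: "1 \<le> k" and kn: "k \<le> n"
    and pairs: "\<forall>t. i1 t \<in> {1..m} \<and> i2 t \<in> {1..m} \<and> i1 t \<noteq> i2 t"
    and conv: "\<forall>i'\<in>{1..m}. \<forall>j'\<in>{1..n}. (\<lambda>t. gossip n k i1 i2 X0 t i' j') \<longlonglongrightarrow> x i' j'"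
begin

abbreviation X where "X t \<equiv> gossip n k i1 i2 X0 t"
abbreviation S where "S t \<equiv> selS n k i1 i2 X0 t"
definition K where "K a = kth_val n k (x a)"
definition Act where "Act e = {t. {i1 t, i2 t} = e}"

lemma X_Suc: "X (Suc t) i j = (if (i = i1 t \<or> i = i2 t) \<and> j \<in> S t
     then (X t (i1 t) j + X t (i2 t) j) / 2 else X t i j)"
  by (simp add: selS_def Let_def)

lemma edge_mem:
  assumes "{a, b} \<in> edges i1 i2"
  shows "a \<in> {1..m}" "b \<in> {1..m}" "infinite (Act {a,b})"
proof -
  have inf: "infinite (Act {a,b})" using assms by (simp add: edges_def Act_def)
  then obtain t where "t \<in> Act {a,b}" by (metis finite.emptyI ex_in_conv)
  then have "{i1 t, i2 t} = {a,b}" by (simp add: Act_def)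
  then show "a \<in> {1..m}" "b \<in> {1..m}" using pairs by (metis doubleton_eq_iff)+
  show "infinite (Act {a,b})" by (rule inf)
qed

lemma selS_sub: "S t \<subseteq> {1..n}"
  by (auto simp: selS_def topk_def)

lemma act_cases:
  assumes "t \<in> Act {a,b}"
  shows "(i1 t = a \<and> i2 t = b) \<or> (i1 t = b \<and> i2 t = a)"
  using assms by (auto simp: Act_def doubleton_eq_iff)

lemma topk_sel:
  assumes "t \<in> Act {a,b}"
  shows "topk n k (X t a) \<subseteq> S t"
  using act_cases[OF assms] by (auto simp: selS_def)

lemma sel_topk:
  assumes "t \<in> Act {a,b}" "j \<notin> topk n k (X t a)" "j \<notin> topk n k (X t b)"
  shows "j \<notin> S t"
  using act_cases[OF assms(1)] assms(2,3) by (auto simp: selS_def)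

lemma avg:
  assumes "t \<in> Act {a,b}" "j \<in> S t"
  shows "X (Suc t) a j = X (Suc t) b j"
  using act_cases[OF assms(1)] assms(2) unfolding X_Suc[of t a j] X_Suc[of t b j]
  by (auto simp: add.commute)

lemma Sinf_iff:
  assumes inf: "infinite (Act e)"
  shows "j \<in> Sinf n k i1 i2 X0 e \<longleftrightarrow> (\<forall>N. \<exists>t\<ge>N. t \<in> Act e \<and> j \<in> S t)"
proof -
  have be: "beta i1 i2 e s = enumerate (Act e) s" for s
    by (simp add: beta_def Act_def)
  show ?thesis
  proof
    assume "j \<in> Sinf n k i1 i2 X0 e"
    then have h: "\<forall>N. \<exists>s\<ge>N. j \<in> S (enumerate (Act e) s)"
      by (auto simp: Sinf_def be)
    show "\<forall>N. \<exists>t\<ge>N. t \<in> Act e \<and> j \<in> S t"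
    proof
      fix N
      obtain s where "s \<ge> N" "j \<in> S (enumerate (Act e) s)" using h by blast
      moreover have "N \<le> enumerate (Act e) s"
        using le_enumerate[OF inf, of s] \<open>s \<ge> N\<close> by linarith
      ultimately show "\<exists>t\<ge>N. t \<in> Act e \<and> j \<in> S t"
        using enumerate_in_set[OF inf] by blast
    qed
  next
    assume h: "\<forall>N. \<exists>t\<ge>N. t \<in> Act e \<and> j \<in> S t"
    have "\<exists>s\<ge>N. j \<in> S (enumerate (Act e) s)" for N
    proof -
      obtain t where t: "t \<ge> enumerate (Act e) N" "t \<in> Act e" "j \<in> S t" using h by blast
      obtain s where s: "enumerate (Act e) s = t" using enumerate_Ex[OF inf t(2)] by blast
      have "s \<ge> N" using t(1) s inf by (metis enumerate_mono_le_iff)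
      then show ?thesis using s t by blast
    qed
    then show "j \<in> Sinf n k i1 i2 X0 e" by (auto simp: Sinf_def be)
  qed
qed

lemma Sinf_sub:
  assumes "infinite (Act e)"
  shows "Sinf n k i1 i2 X0 e \<subseteq> {1..n}"
  using Sinf_iff[OF assms] selS_sub by blast

lemma unif:
  assumes a: "a \<in> {1..m}" and d: "\<delta> > 0"
  shows "\<exists>N. \<forall>t\<ge>N. \<forall>j\<in>{1..n}. \<bar>X t a j - x a j\<bar> < \<delta>"
proof -
  have "\<forall>j\<in>{1..n}. eventually (\<lambda>t. \<bar>X t a j - x a j\<bar> < \<delta>) sequentially"
  proof
    fix j assume j: "j \<in> {1..n}"
    have "(\<lambda>t. X t a j) \<longlonglongrightarrow> x a j" using conv a j by blast
    then show "eventually (\<lambda>t. \<bar>X t a j - x a j\<bar> < \<delta>) sequentially"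
      using d by (simp add: tendsto_iff dist_real_def)
  qed
  then have "eventually (\<lambda>t. \<forall>j\<in>{1..n}. \<bar>X t a j - x a j\<bar> < \<delta>) sequentially"
    by (simp add: eventually_ball_finite)
  then show ?thesis by (simp add: eventually_sequentially)
qed

lemma above_top:
  assumes a: "a \<in> {1..m}" and j: "j \<in> {1..n}" and gt: "x a j > K a"
  shows "\<exists>N. \<forall>t\<ge>N. j \<in> topk n k (X t a)"
proof -
  define \<delta> where "\<delta> = (x a j - K a) / 2"
  have d: "\<delta> > 0" using gt by (simp add: \<delta>_def)
  obtain N where N: "\<forall>t\<ge>N. \<forall>j\<in>{1..n}. \<bar>X t a j - x a j\<bar> < \<delta>" using unif[OF a d] by blast
  have "j \<in> topk n k (X t a)" if t: "t \<ge> N" for t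
  proof (rule ccontr)
    assume nj: "j \<notin> topk n k (X t a)"
    have "topk n k (X t a) \<subseteq> {j' \<in> {1..n}. x a j' > kth_val n k (x a)}"
    proof
      fix j' assume j': "j' \<in> topk n k (X t a)"
      then have j'n: "j' \<in> {1..n}" and ge: "X t a j' \<ge> kth_val n k (X t a)" by (auto simp: topk_def)
      have "X t a j < kth_val n k (X t a)" using nj j by (auto simp: topk_def)
      moreover have "\<bar>X t a j - x a j\<bar> < \<delta>" "\<bar>X t a j' - x a j'\<bar> < \<delta>" using N t j j'n by auto
      ultimately have e1: "x a j - \<delta> < X t a j" and e2: "X t a j' - \<delta> < x a j'"
        and lt: "X t a j < kth_val n k (X t a)" by (auto simp: abs_less_iff)
      have "x a j' > K a" using e1 e2 lt ge unfolding \<delta>_def diff_divide_distrib add_divide_distrib by linarith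
      then show "j' \<in> {j' \<in> {1..n}. x a j' > kth_val n k (x a)}" using j'n by (simp add: K_def)
    qed
    then have "card (topk n k (X t a)) \<le> card {j' \<in> {1..n}. x a j' > kth_val n k (x a)}"
      by (intro card_mono) auto
    then show False using card_topk[OF k1 kn, of "X t a"] card_above[OF k1 kn, of "x a"] by linarith
  qed
  then show ?thesis by blast
qed

lemma below_not:
  assumes a: "a \<in> {1..m}" and j: "j \<in> {1..n}" and lt: "x a j < K a"
  shows "\<exists>N. \<forall>t\<ge>N. j \<notin> topk n k (X t a)"
proof -
  define \<delta> where "\<delta> = (K a - x a j) / 2"
  have d: "\<delta> > 0" using lt by (simp add: \<delta>_def)
  obtain N where N: "\<forall>t\<ge>N. \<forall>j\<in>{1..n}. \<bar>X t a j - x a j\<bar> < \<delta>" using unif[OF a d] by blast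
  have "j \<notin> topk n k (X t a)" if t: "t \<ge> N" for t
  proof
    assume jt: "j \<in> topk n k (X t a)"
    then have ge: "X t a j \<ge> kth_val n k (X t a)" by (auto simp: topk_def)
    have "topk n k (x a) \<subseteq> {j' \<in> {1..n}. X t a j' > kth_val n k (X t a)}"
    proof
      fix j' assume j': "j' \<in> topk n k (x a)"
      then have j'n: "j' \<in> {1..n}" and ge': "x a j' \<ge> K a" by (auto simp: topk_def K_def)
      have "\<bar>X t a j - x a j\<bar> < \<delta>" "\<bar>X t a j' - x a j'\<bar> < \<delta>" using N t j j'n by auto
      then have e1: "X t a j < x a j + \<delta>" and e2: "x a j' - \<delta> < X t a j'" by (auto simp: abs_less_iff)
      have "X t a j' > X t a j" using e1 e2 ge' unfolding \<delta>_def diff_divide_distrib add_divide_distrib by linarith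
      then show "j' \<in> {j' \<in> {1..n}. X t a j' > kth_val n k (X t a)}" using j'n ge by simp
    qed
    then have "card (topk n k (x a)) \<le> card {j' \<in> {1..n}. X t a j' > kth_val n k (X t a)}"
      by (intro card_mono) auto
    then show False using card_topk[OF k1 kn, of "x a"] card_above[OF k1 kn, of "X t a"] by linarith
  qed
  then show ?thesis by blast
qed

lemma act_after:
  assumes "infinite (Act e)"
  shows "\<exists>t\<ge>N. t \<in> Act e"
  using assms by (simp add: infinite_nat_iff_unbounded_le)

lemma above_in_Sinf:
  assumes e: "{a,b} \<in> edges i1 i2" and j: "j \<in> {1..n}" and gt: "x a j > K a"
  shows "j \<in> Sinf n k i1 i2 X0 {a,b}"
proof -
  note em = edge_mem[OF e]
  obtain N where N: "\<forall>t\<ge>N. j \<in> topk n k (X t a)" using above_top[OF em(1) j gt] by blast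
  have "\<exists>t\<ge>N'. t \<in> Act {a,b} \<and> j \<in> S t" for N'
  proof -
    obtain t where t: "t \<ge> max N N'" "t \<in> Act {a,b}" using act_after[OF em(3)] by blast
    then have "j \<in> S t" using N topk_sel[OF t(2)] by auto
    then show ?thesis using t by auto
  qed
  then show ?thesis using Sinf_iff[OF em(3)] by blast
qed

lemma Sinf_eq:
  assumes e: "{a,b} \<in> edges i1 i2" and j: "j \<in> Sinf n k i1 i2 X0 {a,b}"
  shows "x a j = x b j"
proof (rule ccontr)
  assume ne: "x a j \<noteq> x b j"
  note em = edge_mem[OF e]
  have jn: "j \<in> {1..n}" using Sinf_sub[OF em(3)] j by blast
  define L where "L = x a j - x b j"
  have Lp: "\<bar>L\<bar> > 0" using ne by (simp add: L_def)
  have "(\<lambda>t. X t a j) \<longlonglongrightarrow> x a j" "(\<lambda>t. X t b j) \<longlonglongrightarrow> x b j" using conv em jn by auto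
  then have "(\<lambda>t. X (Suc t) a j - X (Suc t) b j) \<longlonglongrightarrow> L"
    unfolding L_def by (intro tendsto_diff LIMSEQ_Suc)
  then have "eventually (\<lambda>t. \<bar>(X (Suc t) a j - X (Suc t) b j) - L\<bar> < \<bar>L\<bar>) sequentially"
    using Lp by (simp add: tendsto_iff dist_real_def)
  then obtain N where N: "\<forall>t\<ge>N. \<bar>(X (Suc t) a j - X (Suc t) b j) - L\<bar> < \<bar>L\<bar>"
    by (auto simp: eventually_sequentially)
  obtain t where t: "t \<ge> N" "t \<in> Act {a,b}" "j \<in> S t" using Sinf_iff[OF em(3)] j by blast
  have "X (Suc t) a j = X (Suc t) b j" by (rule avg[OF t(2,3)])
  then show False using N t(1) by fastforce
qed

lemma Sinf_ge:
  assumes e: "{a,b} \<in> edges i1 i2" and j: "j \<in> Sinf n k i1 i2 X0 {a,b}"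
  shows "x a j \<ge> K a \<or> x b j \<ge> K b"
proof (rule ccontr)
  assume "\<not> ?thesis"
  then have la: "x a j < K a" and lb: "x b j < K b" by auto
  note em = edge_mem[OF e]
  have jn: "j \<in> {1..n}" using Sinf_sub[OF em(3)] j by blast
  obtain N1 where N1: "\<forall>t\<ge>N1. j \<notin> topk n k (X t a)" using below_not[OF em(1) jn la] by blast
  obtain N2 where N2: "\<forall>t\<ge>N2. j \<notin> topk n k (X t b)" using below_not[OF em(2) jn lb] by blast
  obtain t where t: "t \<ge> max N1 N2" "t \<in> Act {a,b}" "j \<in> S t" using Sinf_iff[OF em(3)] j by blast
  show False using sel_topk[OF t(2)] N1 N2 t by auto
qed

lemma eventual_top:
  assumes e: "{a,b} \<in> edges i1 i2"
  shows "\<exists>N. \<forall>t\<ge>N. t \<in> Act {a,b} \<longrightarrow>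
     topk n k (X t a) \<subseteq> {j. j \<in> Sinf n k i1 i2 X0 {a,b} \<and> x a j \<ge> K a}"
proof -
  note em = edge_mem[OF e]
  define P where "P j t = (t \<in> Act {a,b} \<longrightarrow> j \<in> topk n k (X t a) \<longrightarrow>
      j \<in> Sinf n k i1 i2 X0 {a,b} \<and> x a j \<ge> K a)" for j t
  have "\<forall>j\<in>{1..n}. eventually (P j) sequentially"
  proof
    fix j assume jn: "j \<in> {1..n}"
    show "eventually (P j) sequentially"
    proof (cases "j \<in> Sinf n k i1 i2 X0 {a,b}")
      case False
      then obtain N where N: "\<forall>t\<ge>N. \<not> (t \<in> Act {a,b} \<and> j \<in> S t)"
        using Sinf_iff[OF em(3)] by blast
      have "P j t" if "t \<ge> N" for t using N that topk_sel[of t a b] by (auto simp: P_def)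
      then show ?thesis by (auto simp: eventually_sequentially)
    next
      case True
      show ?thesis
      proof (cases "x a j < K a")
        case True
        then obtain N where N: "\<forall>t\<ge>N. j \<notin> topk n k (X t a)" using below_not[OF em(1) jn] by blast
        then show ?thesis by (auto simp: eventually_sequentially P_def)
      next
        case False
        then have "\<forall>t. P j t" using \<open>j \<in> Sinf n k i1 i2 X0 {a,b}\<close> by (auto simp: P_def)
        then show ?thesis by (simp add: always_eventually)
      qed
    qed
  qed
  then have "eventually (\<lambda>t. \<forall>j\<in>{1..n}. P j t) sequentially"
    by (simp add: eventually_ball_finite)
  then obtain N where N: "\<forall>t\<ge>N. \<forall>j\<in>{1..n}. P j t" by (auto simp: eventually_sequentially)
  show ?thesis
  proof (intro exI allI impI)
    fix t assume "N \<le> t" "t \<in> Act {a,b}"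
    then show "topk n k (X t a) \<subseteq> {j. j \<in> Sinf n k i1 i2 X0 {a,b} \<and> x a j \<ge> K a}"
      using N topk_sub[of n k "X t a"] by (auto simp: P_def)
  qed
qed

lemma K_le:
  assumes e: "{a,b} \<in> edges i1 i2"
  shows "K a \<le> K b"
proof (rule ccontr)
  assume "\<not> ?thesis"
  then have lt: "K b < K a" by simp
  note em = edge_mem[OF e]
  obtain N where N: "\<forall>t\<ge>N. t \<in> Act {a,b} \<longrightarrow>
     topk n k (X t a) \<subseteq> {j. j \<in> Sinf n k i1 i2 X0 {a,b} \<and> x a j \<ge> K a}"
    using eventual_top[OF e] by blast
  obtain t where t: "t \<ge> N" "t \<in> Act {a,b}" using act_after[OF em(3)] by blast
  have "topk n k (X t a) \<subseteq> {j \<in> {1..n}. x b j > kth_val n k (x b)}"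
  proof
    fix j assume j: "j \<in> topk n k (X t a)"
    then have "j \<in> Sinf n k i1 i2 X0 {a,b}" "x a j \<ge> K a" using N t by auto
    moreover have "j \<in> {1..n}" using j topk_sub by blast
    ultimately show "j \<in> {j \<in> {1..n}. x b j > kth_val n k (x b)}"
      using Sinf_eq[OF e] lt by (auto simp: K_def)
  qed
  then have "card (topk n k (X t a)) \<le> card {j \<in> {1..n}. x b j > kth_val n k (x b)}"
    by (intro card_mono) auto
  then show False using card_topk[OF k1 kn, of "X t a"] card_above[OF k1 kn, of "x b"] by linarith
qed

lemma K_eq:
  assumes e: "{a,b} \<in> edges i1 i2"
  shows "K a = K b"
  using K_le[OF e] K_le[of b a] e by (simp add: insert_commute)

lemma Sinf_ne:
  assumes e: "{a,b} \<in> edges i1 i2"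
  shows "Sinf n k i1 i2 X0 {a,b} \<noteq> {}"
proof -
  note em = edge_mem[OF e]
  obtain N where N: "\<forall>t\<ge>N. t \<in> Act {a,b} \<longrightarrow>
     topk n k (X t a) \<subseteq> {j. j \<in> Sinf n k i1 i2 X0 {a,b} \<and> x a j \<ge> K a}"
    using eventual_top[OF e] by blast
  obtain t where t: "t \<ge> N" "t \<in> Act {a,b}" using act_after[OF em(3)] by blast
  have "card (topk n k (X t a)) \<ge> 1" using card_topk[OF k1 kn, of "X t a"] k1 by linarith
  then obtain j where "j \<in> topk n k (X t a)" by (metis card.empty ex_in_conv not_one_le_zero)
  then show ?thesis using N t by blast
qed

lemma alpha_ge:
  assumes e: "{a,b} \<in> edges i1 i2"
  shows "alpha n k i1 i2 X0 x a b \<ge> K a"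
proof -
  note em = edge_mem[OF e]
  have fin: "finite (Sinf n k i1 i2 X0 {a,b})"
    using Sinf_sub[OF em(3)] finite_subset by blast
  have "\<forall>j\<in>Sinf n k i1 i2 X0 {a,b}. x a j \<ge> K a"
    using Sinf_ge[OF e] Sinf_eq[OF e] K_eq[OF e] by fastforce
  then show ?thesis unfolding alpha_def
    using fin Sinf_ne[OF e] by (simp add: Min_ge_iff)
qed

lemma K_const:
  assumes "(p, q) \<in> {(u, v). {u, v} \<in> edges i1 i2}\<^sup>*"
  shows "K p = K q"
  using assms
proof (induction rule: rtrancl_induct)
  case base then show ?case by simp
next
  case (step y z) then show ?case using K_eq[of y z] by simp
qed

lemma propagate:
  assumes "(p, q) \<in> {(u, v). {u, v} \<in> edges i1 i2}\<^sup>*" and j: "j \<in> {1..n}" and "x p j > K p"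
  shows "x q j > K q"
  using assms(1,3)
proof (induction rule: rtrancl_induct)
  case base then show ?case by simp
next
  case (step y z)
  then have e: "{y,z} \<in> edges i1 i2" and g: "x y j > K y" by auto
  have "j \<in> Sinf n k i1 i2 X0 {y,z}" by (rule above_in_Sinf[OF e j g])
  then show ?case using Sinf_eq[OF e] K_eq[OF e] g by simp
qed

end

theorem mainTheorem6:
  fixes m n k :: nat and i1 i2 :: "nat \<Rightarrow> nat" and X0 Xinf :: "nat \<Rightarrow> nat \<Rightarrow> real"
    and a b i j :: nat
  assumes "m \<ge> 2" and "n \<ge> 1" and "1 \<le> k" and "k \<le> n"
    and "\<forall>t. i1 t \<in> {1..m} \<and> i2 t \<in> {1..m} \<and> i1 t \<noteq> i2 t"
    and "graph_connected m (edges i1 i2)"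
    and "\<forall>i'\<in>{1..m}. \<forall>j'\<in>{1..n}. (\<lambda>t. gossip n k i1 i2 X0 t i' j') \<longlonglongrightarrow> Xinf i' j'"
    and "{a, b} \<in> edges i1 i2"
    and "j \<in> {1..n}" and "i \<in> {1..m}"
    and "Xinf i j > alpha n k i1 i2 X0 Xinf a b"
  shows "\<forall>e\<in>edges i1 i2. j \<in> Sinf n k i1 i2 X0 e"
proof
  interpret G: GS m n k i1 i2 X0 Xinf
    using assms(3,4,5,7) by unfold_locales auto
  fix e assume e: "e \<in> edges i1 i2"
  then have "infinite {t. {i1 t, i2 t} = e}" by (simp add: edges_def)
  then have "{t. {i1 t, i2 t} = e} \<noteq> {}" by (metis finite.emptyI)
  then obtain t0 where "{i1 t0, i2 t0} = e" by blast
  then obtain c d where cd: "e = {c, d}" by blast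
  have ec: "{c,d} \<in> edges i1 i2" using e cd by simp
  have ab: "a \<in> {1..m}" using G.edge_mem[OF assms(8)] by simp
  have c: "c \<in> {1..m}" using G.edge_mem[OF ec] by simp
  have "Xinf i j > G.K a" using G.alpha_ge[OF assms(8)] assms(11) by linarith
  moreover have "G.K a = G.K i"
    using G.K_const assms(6) ab assms(10) unfolding graph_connected_def by blast
  ultimately have "Xinf i j > G.K i" by simp
  moreover have "(i, c) \<in> {(u, v). {u, v} \<in> edges i1 i2}\<^sup>*"
    using assms(6,10) c unfolding graph_connected_def by blast
  ultimately have "Xinf c j > G.K c" using G.propagate assms(9) by blast
  then have "j \<in> Sinf n k i1 i2 X0 {c,d}" by (rule G.above_in_Sinf[OF ec assms(9)])
  then show "j \<in> Sinf n k i1 i2 X0 e" using cd by simp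
qed

end
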